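(* Let $\{a_n\}_{n\ge 0}$ be a sequence of positive real numbers and let $N_0$ be a positive integer. (1) Suppose that $a_n^2-a_{n-1}a_{n+1}>0$ for all $n\ge N_0+1$ (strict log-concavity of $\{a_n\}_{n\ge N_0}$), and that $$\left(\frac{a_n}{a_{n-1}}\right)^2<\frac{a_{n-1}}{a_{n-2}}\cdot\frac{a_{n+1}}{a_n}\quad\text{for all } n\ge N_0+2$$ (strict ratio-log-convexity of $\{a_n\}_{n\ge N_0}$). Then for all $n\ge N_0+1$, $$a_n^2(a_n^2-a_{n-1}a_{n+1})>a_{n-1}^2(a_{n+1}^2-a_na_{n+2}).$$ (2) Suppose instead that $\{a_n\}_{n\ge N_0}$ is strictly $2$-log-convex, i.e. setting $b_n=a_{n-1}a_{n+1}-a_n^2$, we have $b_n>0$ for all $n\ge N_0+1$ and $b_n^2<b_{n-1}b_{n+1}$ for all $n\ge N_0+2$, and that the strict ratio-log-convexity condition of part (1) holds. Then the same inequality $a_n^2(a_n^2-a_{n-1}a_{n+1})>a_{n-1}^2(a_{n+1}^2-a_na_{n+2})$ holds for all $n\ge N_0+2$. *)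

theory Defs
  imports Complex_Main
begin

end

theory Submission
  imports Defs
begin

lemma L1:
  fixes x y z w :: real
  assumes p: "x>0" "y>0" "z>0" "w>0" and h1: "y^2 - x*z > 0"
    and h2: "(z/y)^2 < (y/x)*(w/z)"
  shows "y^2*(y^2 - x*z) > x^2*(z^2 - y*w)"
proof -
  have h2': "z^3*x < y^3*w" using h2 p by (simp add: field_simps power2_eq_square power3_eq_cube)
  have "x^2*y^4*w > x^3*y*z^3" using mult_strict_left_mono[OF h2', of "x^2*y"] p
    by (simp add: algebra_simps power2_eq_square power3_eq_cube power4_eq_xxxx)
  moreover have "y*((y^2 - x*z)^2*(y^2+x*z)) \<ge> 0" using p by simp
  ultimately have "y^3*(y^2*(y^2 - x*z) - x^2*(z^2 - y*w)) > 0"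
    by (simp add: algebra_simps power2_eq_square power3_eq_cube power4_eq_xxxx) 
  thus ?thesis using p by (simp add: zero_less_mult_iff)
qed
lemma L2:
  fixes v x y z w :: real
  assumes p: "v>0" "x>0" "y>0" "z>0" "w>0" and B: "x*z - y^2 > 0" and C: "v*y - x^2 > 0"
    and h: "(x*z - y^2)^2 < (v*y - x^2)*(y*w - z^2)"
    and r: "(y/x)^2 < (x/v)*(z/y)"
  shows "y^2*(y^2 - x*z) > x^2*(z^2 - y*w)"
proof -
  have r': "y^3*v < x^3*z" using r p by (simp add: field_simps power2_eq_square power3_eq_cube)
  have e: "x^2*(x*z - y^2) \<ge> y^2*(v*y - x^2)" using r'
    by (simp add: algebra_simps power2_eq_square power3_eq_cube)
  have "x^2*(x*z - y^2)^2 \<ge> y^2*(v*y - x^2)*(x*z - y^2)"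
    using mult_right_mono[OF e, of "x*z - y^2"] B by (simp add: power2_eq_square algebra_simps)
  moreover have "x^2*(x*z - y^2)^2 < x^2*((v*y - x^2)*(y*w - z^2))"
    using h p by simp
  ultimately have "(v*y - x^2) * (y^2*(x*z - y^2)) < (v*y - x^2) * (x^2*(y*w - z^2))"
    by (simp add: algebra_simps)
  hence "y^2*(x*z - y^2) < x^2*(y*w - z^2)" using C mult_less_cancel_left_pos by blast
  thus ?thesis by (simp add: algebra_simps)
qed

theorem theorem4p1:
  fixes a :: "nat \<Rightarrow> real" and N0 :: nat
  assumes pos: "\<And>n. a n > 0"
    and N0: "N0 \<ge> 1"
  shows "((\<forall>n\<ge>N0 + 1. (a n)^2 - a (n - 1) * a (n + 1) > 0) \<and>
          (\<forall>n\<ge>N0 + 2. (a n / a (n - 1))^2 < (a (n - 1) / a (n - 2)) * (a (n + 1) / a n))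
          \<longrightarrow> (\<forall>n\<ge>N0 + 1. (a n)^2 * ((a n)^2 - a (n - 1) * a (n + 1))
                 > (a (n - 1))^2 * ((a (n + 1))^2 - a n * a (n + 2))))
       \<and>
         ((\<forall>n\<ge>N0 + 1. a (n - 1) * a (n + 1) - (a n)^2 > 0) \<and>
          (\<forall>n\<ge>N0 + 2. (a (n - 1) * a (n + 1) - (a n)^2)^2
              < (a (n - 2) * a n - (a (n - 1))^2) * (a n * a (n + 2) - (a (n + 1))^2)) \<and>
          (\<forall>n\<ge>N0 + 2. (a n / a (n - 1))^2 < (a (n - 1) / a (n - 2)) * (a (n + 1) / a n))
          \<longrightarrow> (\<forall>n\<ge>N0 + 2. (a n)^2 * ((a n)^2 - a (n - 1) * a (n + 1))
                 > (a (n - 1))^2 * ((a (n + 1))^2 - a n * a (n + 2))))"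
proof (intro conjI impI allI)
  fix n assume H: "(\<forall>n\<ge>N0 + 1. (a n)^2 - a (n - 1) * a (n + 1) > 0) \<and>
          (\<forall>n\<ge>N0 + 2. (a n / a (n - 1))^2 < (a (n - 1) / a (n - 2)) * (a (n + 1) / a n))"
    and n: "n \<ge> N0 + 1"
  have h1: "(a n)^2 - a (n - 1) * a (n + 1) > 0" using H n by blast
  have "(a (n+1) / a (n+1 - 1))^2 < (a (n+1 - 1) / a (n+1 - 2)) * (a (n+1 + 1) / a (n+1))"
    using H n by (metis add_le_mono1 one_add_one add.assoc)
  moreover have "n+1-1 = n" "n+1-2 = n-1" "n+1+1 = n+2" using n N0 by auto
  ultimately have h2: "(a (n+1) / a n)^2 < (a n / a (n - 1)) * (a (n + 2) / a (n+1))" by simp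
  show "(a n)^2 * ((a n)^2 - a (n - 1) * a (n + 1)) > (a (n - 1))^2 * ((a (n + 1))^2 - a n * a (n + 2))"
    by (rule L1[OF pos pos pos pos h1 h2])
next
  fix n assume H: "(\<forall>n\<ge>N0 + 1. a (n - 1) * a (n + 1) - (a n)^2 > 0) \<and>
          (\<forall>n\<ge>N0 + 2. (a (n - 1) * a (n + 1) - (a n)^2)^2
              < (a (n - 2) * a n - (a (n - 1))^2) * (a n * a (n + 2) - (a (n + 1))^2)) \<and>
          (\<forall>n\<ge>N0 + 2. (a n / a (n - 1))^2 < (a (n - 1) / a (n - 2)) * (a (n + 1) / a n))"
    and n: "n \<ge> N0 + 2"
  have B: "a (n - 1) * a (n + 1) - (a n)^2 > 0" using H n by simp
  have "a (n-1 - 1) * a (n-1 + 1) - (a (n-1))^2 > 0"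
    using H[THEN conjunct1, rule_format, of "n-1"] n by linarith
  moreover have "n-1-1 = n-2" "n-1+1 = n" using n N0 by auto
  ultimately have C: "a (n - 2) * a n - (a (n-1))^2 > 0" by simp
  have h: "(a (n - 1) * a (n + 1) - (a n)^2)^2
              < (a (n - 2) * a n - (a (n - 1))^2) * (a n * a (n + 2) - (a (n + 1))^2)" using H n by blast
  have r: "(a n / a (n - 1))^2 < (a (n - 1) / a (n - 2)) * (a (n + 1) / a n)" using H n by blast
  show "(a n)^2 * ((a n)^2 - a (n - 1) * a (n + 1)) > (a (n - 1))^2 * ((a (n + 1))^2 - a n * a (n + 2))"
    by (rule L2[OF pos pos pos pos pos B C h r])
qed

end
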